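(* For any even integer $n\ge4$ and any choice function $\eta$, there exists a $(1/\alpha_n)$-Hölder continuous surjection $f:[0,1]\to K^\eta$, where $\alpha_n=\frac{\log(5n-6)}{\log n}$.
   Context: Let $\mathcal{A}_n=\{1,\dots,5n-6\}$, $\mathcal{A}_n^m$ words of length $m$ ($\mathcal{A}_n^0=\{\varepsilon\}$), $\mathcal{A}_n^*=\bigcup_m\mathcal{A}_n^m$. Define maps $\psi^1_{n,j},\psi^2_{n,j}:\mathbb{R}^2\to\mathbb{R}^2$, $j\in\mathcal{A}_n$, each of the form $x\mapsto\frac1nx+b$: for $j=1,\dots,4n-4$, $\psi^1_{n,j}=\psi^2_{n,j}$ map $[0,1]^2$ onto the $4n-4$ squares of the grid of $n^2$ closed squares of side $1/n$ in $[0,1]^2$ meeting $\partial[0,1]^2$; for $j=4n-3+i$, $i=0,\dots,\frac n2-2$, $\psi^1_{n,j}(x)=\psi^2_{n,j}(x)=\frac1nx+(\frac12+\frac in,\frac1n)$; for $j=4n+\frac n2-4+i$, $i=0,\dots,\frac n2-2$, $\psi^1_{n,j}(x)=\frac1nx+(\frac{i+1}n,\frac2n)$, $\psi^2_{n,j}(x)=\frac1nx+(\frac{i+1}n,\frac1n)$. A choice function is any $\eta:\mathcal{A}_n^*\to\{1,2\}$; $\phi^\eta_\varepsilon=\mathrm{id}$, $\phi^\eta_w=\psi^{\eta(\varepsilon)}_{n,i_1}\circ\psi^{\eta(i_1)}_{n,i_2}\circ\cdots\circ\psi^{\eta(i_1\cdots i_{m-1})}_{n,i_m}$ for $w=i_1\cdots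 i_m$; $K^\eta=\bigcap_{m\ge0}\bigcup_{w\in\mathcal{A}_n^m}\phi^\eta_w([0,1]^2)$. *)

theory Defs
  imports "HOL-Analysis.Analysis"
begin

definition alph :: "nat \<Rightarrow> nat set" where
  "alph n = {1..5*n-6}"

text \<open>Letters 1..4n-4 enumerate the 4n-4 boundary grid squares (lower-left corners
  (a/n, c/n)): bottom row, top row, left column (interior), right column (interior).\<close>
definition offs :: "nat \<Rightarrow> nat \<Rightarrow> nat \<Rightarrow> real \<times> real" where
  "offs n e j =
    (if 1 \<le> j \<and> j \<le> n then (real (j - 1) / n, 0)
     else if n + 1 \<le> j \<and> j \<le> 2*n then (real (j - n - 1) / n, real (n - 1) / n)
     else if 2*n + 1 \<le> j \<and> j \<le> 3*n - 2 then (0, real (j - 2*n) / n)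
     else if 3*n - 1 \<le> j \<and> j \<le> 4*n - 4 then (real (n - 1) / n, real (j + 2 - 3*n) / n)
     else if 4*n - 3 \<le> j \<and> j \<le> 4*n - 3 + (n div 2 - 2)
       then (1/2 + real (j - (4*n - 3)) / n, 1 / n)
     else if 4*n + n div 2 - 4 \<le> j \<and> j \<le> 4*n + n div 2 - 4 + (n div 2 - 2)
       then (real (j - (4*n + n div 2 - 4) + 1) / n, if e = 1 then 2 / n else 1 / n)
     else (0, 0))"

definition psi :: "nat \<Rightarrow> nat \<Rightarrow> nat \<Rightarrow> real \<times> real \<Rightarrow> real \<times> real" where
  "psi n e j = (\<lambda>x. (1 / real n) *\<^sub>R x + offs n e j)"

text \<open>phi_aux n eta p w: composition along w, where p is the prefix already read.\<close>
fun phi_aux :: "nat \<Rightarrow> (nat list \<Rightarrow> nat) \<Rightarrow> nat list \<Rightarrow> nat list \<Rightarrow> real \<times> real \<Rightarrow> real \<times> real" where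
  "phi_aux n eta p [] = id"
| "phi_aux n eta p (i # w) = psi n (eta p) i \<circ> phi_aux n eta (p @ [i]) w"

definition phi :: "nat \<Rightarrow> (nat list \<Rightarrow> nat) \<Rightarrow> nat list \<Rightarrow> real \<times> real \<Rightarrow> real \<times> real" where
  "phi n eta w = phi_aux n eta [] w"

definition unit_square :: "(real \<times> real) set" where
  "unit_square = cbox (0, 0) (1, 1)"

definition Keta :: "nat \<Rightarrow> (nat list \<Rightarrow> nat) \<Rightarrow> (real \<times> real) set" where
  "Keta n eta = (\<Inter>m. \<Union>w \<in> {w. set w \<subseteq> alph n \<and> length w = m}. phi n eta w ` unit_square)"

definition holder_continuous_on :: "real \<Rightarrow> real set \<Rightarrow> (real \<Rightarrow> 'a::metric_space) \<Rightarrow> bool" where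
  "holder_continuous_on g S f \<longleftrightarrow>
     (\<exists>C. \<forall>s\<in>S. \<forall>t\<in>S. dist (f s) (f t) \<le> C * dist s t powr g)"

end

theory Submission
  imports Defs
begin

definition pos :: "nat \<Rightarrow> nat \<Rightarrow> nat \<Rightarrow> nat \<times> nat" where
  "pos n e j =
    (if 1 \<le> j \<and> j \<le> n then (j - 1, 0)
     else if n + 1 \<le> j \<and> j \<le> 2*n then (j - n - 1, n - 1)
     else if 2*n + 1 \<le> j \<and> j \<le> 3*n - 2 then (0, j - 2*n)
     else if 3*n - 1 \<le> j \<and> j \<le> 4*n - 4 then (n - 1, j + 2 - 3*n)
     else if 4*n - 3 \<le> j \<and> j \<le> 4*n - 3 + (n div 2 - 2)
       then (n div 2 + (j - (4*n - 3)), 1)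
     else if 4*n + n div 2 - 4 \<le> j \<and> j \<le> 4*n + n div 2 - 4 + (n div 2 - 2)
       then (j - (4*n + n div 2 - 4) + 1, if e = 1 then 2 else 1)
     else (0, 0))"

lemma pos_bot: "1 \<le> j \<Longrightarrow> j \<le> n \<Longrightarrow> pos n e j = (j - 1, 0)"
  by (simp add: pos_def)
lemma pos_top: "n + 1 \<le> j \<Longrightarrow> j \<le> 2*n \<Longrightarrow> pos n e j = (j - n - 1, n - 1)"
proof -
  assume a: "n + 1 \<le> j" "j \<le> 2*n"
  then have "\<not> (1 \<le> j \<and> j \<le> n)" by linarith
  with a show ?thesis by (simp add: pos_def)
qed
lemma pos_left: "2*n + 1 \<le> j \<Longrightarrow> j \<le> 3*n - 2 \<Longrightarrow> pos n e j = (0, j - 2*n)"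
proof -
  assume a: "2*n + 1 \<le> j" "j \<le> 3*n - 2"
  then have "\<not> (1 \<le> j \<and> j \<le> n)" "\<not> (n + 1 \<le> j \<and> j \<le> 2*n)" by linarith+
  with a show ?thesis by (simp add: pos_def)
qed
lemma pos_right: "3*n - 1 \<le> j \<Longrightarrow> j \<le> 4*n - 4 \<Longrightarrow> 4 \<le> n \<Longrightarrow> pos n e j = (n - 1, j + 2 - 3*n)"
proof -
  assume a: "3*n - 1 \<le> j" "j \<le> 4*n - 4" "4 \<le> n"
  then have "\<not> (1 \<le> j \<and> j \<le> n)" "\<not> (n + 1 \<le> j \<and> j \<le> 2*n)"
     "\<not> (2*n + 1 \<le> j \<and> j \<le> 3*n - 2)" by linarith+
  with a show ?thesis by (simp add: pos_def)
qed
lemma pos_bar1: "4*n - 3 \<le> j \<Longrightarrow> j \<le> 4*n - 3 + (n div 2 - 2) \<Longrightarrow> 4 \<le> n \<Longrightarrow>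
   pos n e j = (n div 2 + (j - (4*n - 3)), 1)"
proof -
  assume a: "4*n - 3 \<le> j" "j \<le> 4*n - 3 + (n div 2 - 2)" "4 \<le> n"
  then have "\<not> (1 \<le> j \<and> j \<le> n)" "\<not> (n + 1 \<le> j \<and> j \<le> 2*n)"
     "\<not> (2*n + 1 \<le> j \<and> j \<le> 3*n - 2)" "\<not> (3*n - 1 \<le> j \<and> j \<le> 4*n - 4)" by linarith+
  with a show ?thesis by (simp add: pos_def)
qed
lemma pos_bar2: "4*n + n div 2 - 4 \<le> j \<Longrightarrow> j \<le> 4*n + n div 2 - 4 + (n div 2 - 2) \<Longrightarrow> 4 \<le> n \<Longrightarrow>
   pos n e j = (j - (4*n + n div 2 - 4) + 1, if e = 1 then 2 else 1)"
proof -
  assume a: "4*n + n div 2 - 4 \<le> j" "j \<le> 4*n + n div 2 - 4 + (n div 2 - 2)" "4 \<le> n"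
  then have "\<not> (1 \<le> j \<and> j \<le> n)" "\<not> (n + 1 \<le> j \<and> j \<le> 2*n)"
     "\<not> (2*n + 1 \<le> j \<and> j \<le> 3*n - 2)" "\<not> (3*n - 1 \<le> j \<and> j \<le> 4*n - 4)"
     "\<not> (4*n - 3 \<le> j \<and> j \<le> 4*n - 3 + (n div 2 - 2))" by linarith+
  with a show ?thesis by (simp add: pos_def)
qed

definition addp :: "nat \<times> nat \<Rightarrow> nat \<times> nat \<Rightarrow> nat \<times> nat" where
  "addp a b = (fst a + fst b, snd a + snd b)"
definition cA :: "bool \<Rightarrow> bool \<Rightarrow> nat \<times> nat" where
  "cA t s = (if t then (if s then (1,1) else (0,0)) else (if s then (1,0) else (0,1)))"
definition ctask :: "nat \<Rightarrow> nat \<Rightarrow> nat \<Rightarrow> bool" where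
  "ctask n e j = even (fst (pos n e j) + snd (pos n e j))"
definition gEnt :: "nat \<Rightarrow> nat \<Rightarrow> nat \<times> bool \<Rightarrow> nat \<times> nat" where
  "gEnt n e v = addp (pos n e (fst v)) (cA (ctask n e (fst v)) (snd v))"
definition gExt :: "nat \<Rightarrow> nat \<Rightarrow> nat \<times> bool \<Rightarrow> nat \<times> nat" where
  "gExt n e v = addp (pos n e (fst v)) (cA (ctask n e (fst v)) (\<not> snd v))"

fun chain :: "nat \<Rightarrow> nat \<Rightarrow> nat \<times> nat \<Rightarrow> (nat \<times> bool) list \<Rightarrow> nat \<times> nat \<Rightarrow> bool" where
  "chain n e p [] q = (p = q)"
| "chain n e p (v # vs) q = (gEnt n e v = p \<and> chain n e (gExt n e v) vs q)"

lemma chain_append: "chain n e p (xs @ ys) q = (\<exists>r. chain n e p xs r \<and> chain n e r ys q)"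
  by (induction xs arbitrary: p) auto

lemma chain_appI: "chain n e p xs r \<Longrightarrow> chain n e r ys q \<Longrightarrow> chain n e p (xs @ ys) q"
  using chain_append by blast

lemma chain_snoc: "chain n e p (xs @ [v]) q = (chain n e p xs (gEnt n e v) \<and> gExt n e v = q)"
  by (induction xs arbitrary: p) auto

definition rv :: "(nat \<times> bool) list \<Rightarrow> (nat \<times> bool) list" where
  "rv xs = rev (map (\<lambda>(j,s). (j, \<not> s)) xs)"

lemma chain_rv: "chain n e p xs q \<Longrightarrow> chain n e q (rv xs) p"
proof (induction xs arbitrary: p)
  case Nil then show ?case by (simp add: rv_def)
next
  case (Cons v vs)
  then have 1: "gEnt n e v = p" and 2: "chain n e (gExt n e v) vs q" by auto
  have "chain n e q (rv vs) (gExt n e v)" using Cons.IH 2 by blast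
  moreover have "rv (v # vs) = rv vs @ [(fst v, \<not> snd v)]"
    by (cases v) (simp add: rv_def)
  moreover have "gEnt n e (fst v, \<not> snd v) = gExt n e v" "gExt n e (fst v, \<not> snd v) = gEnt n e v"
    by (simp_all add: gEnt_def gExt_def)
  ultimately show ?case using 1 by (simp add: chain_snoc)
qed

lemma rv_append: "rv (xs @ ys) = rv ys @ rv xs" by (simp add: rv_def)

definition botR :: "nat \<Rightarrow> (nat \<times> bool) list" where
  "botR n = map (\<lambda>x. (x+1, False)) [1..<n-1]"
definition topR :: "nat \<Rightarrow> (nat \<times> bool) list" where
  "topR n = map (\<lambda>x. (x+n+1, False)) [1..<n-1]"
definition lfUp :: "nat \<Rightarrow> nat \<Rightarrow> nat \<Rightarrow> (nat \<times> bool) list" where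
  "lfUp n a b = map (\<lambda>y. (y+2*n, odd y)) [a..<b]"
definition rtUp :: "nat \<Rightarrow> (nat \<times> bool) list" where
  "rtUp n = map (\<lambda>y. (y+3*n-2, even y)) [1..<n-1]"
definition barRin :: "nat \<Rightarrow> (nat \<times> bool) list" where
  "barRin n = map (\<lambda>i. (4*n-3+i, False)) [0..<n div 2 - 1]"
definition barLout :: "nat \<Rightarrow> (nat \<times> bool) list" where
  "barLout n = map (\<lambda>i. (4*n + n div 2 - 4 + i, False)) [0..<n div 2 - 1]"

lemma chain_bot_aux: "1 \<le> k \<Longrightarrow> k \<le> n - 1 \<Longrightarrow>
   chain n e (1,1) (map (\<lambda>x. (x+1, False)) [1..<k]) (k, if odd k then 1 else 0)"
proof (induction k rule: nat_induct_at_least)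
  case base then show ?case by simp
next
  case (Suc k)
  have p: "pos n e (k+1) = (k, 0)" using Suc by (simp add: pos_bot)
  show ?case using Suc p
    by (auto simp add: chain_snoc gEnt_def gExt_def ctask_def addp_def cA_def)
qed


definition barL :: "nat \<Rightarrow> (nat \<times> bool) list" where "barL n = barLout n @ rv (barLout n)"
definition barR :: "nat \<Rightarrow> (nat \<times> bool) list" where "barR n = rv (barRin n) @ barRin n"

definition planD0 :: "nat \<Rightarrow> nat \<Rightarrow> (nat \<times> bool) list" where
  "planD0 n e = [(1,False)] @
     (if e = 1 then lfUp n 1 3 @ barL n @ lfUp n 3 (n-1) else barL n @ lfUp n 1 3 @ lfUp n 3 (n-1)) @
     [(n+1,True),(n+1,False)] @ rv (lfUp n 3 (n-1)) @ rv (lfUp n 1 3) @ botR n @ rtUp n @ [(2*n,False)]"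
definition planD1 :: "nat \<Rightarrow> nat \<Rightarrow> (nat \<times> bool) list" where
  "planD1 n e = [(2*n,True)] @ rv (topR n) @ topR n @ rv (rtUp n) @ [(n,False),(n,True)] @
     barR n @ rv (botR n) @ [(1,True)]"
definition planA0 :: "nat \<Rightarrow> nat \<Rightarrow> (nat \<times> bool) list" where
  "planA0 n e = [(n+1,False)] @ topR n @ rv (topR n) @
     (if e = 1 then rv (lfUp n 3 (n-1)) @ barL n @ rv (lfUp n 1 3)
      else rv (lfUp n 3 (n-1)) @ rv (lfUp n 1 3) @ barL n) @
     [(1,True),(1,False)] @ botR n @ [(n,False)]"
definition planA1 :: "nat \<Rightarrow> nat \<Rightarrow> (nat \<times> bool) list" where
  "planA1 n e = [(n,True)] @ rtUp n @ [(2*n,False),(2*n,True)] @ rv (rtUp n) @ barR n @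
     rv (botR n) @ lfUp n 1 3 @ lfUp n 3 (n-1) @ [(n+1,True)]"

definition plan :: "nat \<Rightarrow> bool \<Rightarrow> nat \<Rightarrow> bool \<Rightarrow> (nat \<times> bool) list" where
  "plan n t e s = (if t then (if s then planD1 n e else planD0 n e)
                   else (if s then planA1 n e else planA0 n e))"

definition scl :: "nat \<Rightarrow> nat \<times> nat \<Rightarrow> nat \<times> nat" where
  "scl n p = (n * fst p, n * snd p)"

context fixes n :: nat assumes ev: "even n" and n4: "4 \<le> n"
begin

lemma chain_top_aux: "1 \<le> k \<Longrightarrow> k \<le> n - 1 \<Longrightarrow>
   chain n e (1, n-1) (map (\<lambda>x. (x+n+1, False)) [1..<k]) (k, if odd k then n-1 else n)"
proof (induction k rule: nat_induct_at_least)
  case base then show ?case by simp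
next
  case (Suc k)
  have p: "pos n e (k+n+1) = (k, n-1)" using Suc by (simp add: pos_top)
  have "even (k + (n - 1)) = odd k" using ev n4 by auto
  then show ?case using Suc p
    by (auto simp add: chain_snoc gEnt_def gExt_def ctask_def addp_def cA_def)
qed

lemma chain_lf_aux: "a \<le> k \<Longrightarrow> 1 \<le> a \<Longrightarrow> k \<le> n - 1 \<Longrightarrow>
   chain n e (if odd a then 1 else 0, a) (lfUp n a k) (if odd k then 1 else 0, k)"
proof (induction k rule: nat_induct_at_least)
  case base then show ?case by (simp add: lfUp_def)
next
  case (Suc k)
  have p: "pos n e (k+2*n) = (0, k)" using Suc by (simp add: pos_left)
  have u: "[a..<Suc k] = [a..<k] @ [k]" using Suc by simp
  show ?case using Suc p unfolding lfUp_def u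
    by (auto simp add: chain_snoc gEnt_def gExt_def ctask_def addp_def cA_def lfUp_def)
qed

lemma chain_rt_aux: "1 \<le> k \<Longrightarrow> k \<le> n - 1 \<Longrightarrow>
   chain n e (n-1, 1) (map (\<lambda>y. (y+3*n-2, even y)) [1..<k]) (if odd k then n-1 else n, k)"
proof (induction k rule: nat_induct_at_least)
  case base then show ?case by simp
next
  case (Suc k)
  have p: "pos n e (k+3*n-2) = (n-1, k)" using Suc n4 by (simp add: pos_right)
  have "even (n - 1 + k) = odd k" using ev n4 by auto
  then show ?case using Suc p n4
    by (auto simp add: chain_snoc gEnt_def gExt_def ctask_def addp_def cA_def)
qed

lemma chain_br_aux: "k \<le> n div 2 - 1 \<Longrightarrow>
   chain n e (n div 2, if odd (n div 2) then 1 else 2) (map (\<lambda>i. (4*n-3+i, False)) [0..<k])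
     (n div 2 + k, if odd (n div 2 + k) then 1 else 2)"
proof (induction k)
  case 0 then show ?case by simp
next
  case (Suc k)
  have p: "pos n e (4*n-3+k) = (n div 2 + k, 1)" using Suc n4 by (simp add: pos_bar1)
  show ?case using Suc p n4
    apply (auto simp add: chain_snoc gEnt_def gExt_def ctask_def addp_def cA_def)
    apply (simp_all add: numeral_2_eq_2)
    done
qed

lemma chain_bl_aux: "k \<le> n div 2 - 1 \<Longrightarrow>
   chain n e (1, if e = 1 then 3 else 1) (map (\<lambda>i. (4*n + n div 2 - 4 + i, False)) [0..<k])
     (k+1, if odd k then 2 else if e = 1 then 3 else 1)"
proof (induction k)
  case 0 then show ?case by simp
next
  case (Suc k)
  have p: "pos n e (4*n + n div 2 - 4 + k) = (k + 1, if e = 1 then 2 else 1)"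
    using Suc n4 by (simp add: pos_bar2)
  show ?case using Suc p n4
    apply (auto simp add: chain_snoc gEnt_def gExt_def ctask_def addp_def cA_def)
    apply (simp_all add: numeral_2_eq_2)
    done
qed


lemma odd_n1: "odd (n - 1)" using ev n4 by auto

lemma ch_bot: "chain n e (1,1) (botR n) (n-1, 1)"
  using chain_bot_aux[of "n-1" n e] n4 odd_n1 by (simp add: botR_def)
lemma ch_top: "chain n e (1,n-1) (topR n) (n-1, n-1)"
  using chain_top_aux[of "n-1" e] n4 odd_n1 by (simp add: topR_def)
lemma ch_lf1: "chain n e (1,1) (lfUp n 1 3) (1, 3)"
  using chain_lf_aux[of 1 3 e] n4 by simp
lemma ch_lf2: "chain n e (1,3) (lfUp n 3 (n-1)) (1, n-1)"
  using chain_lf_aux[of 3 "n-1" e] n4 odd_n1 by simp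
lemma ch_rt: "chain n e (n-1,1) (rtUp n) (n-1, n-1)"
  using chain_rt_aux[of "n-1" e] n4 odd_n1 by (simp add: rtUp_def)
lemma ch_barR: "chain n e (n-1,1) (barR n) (n-1, 1)"
proof -
  have "n div 2 + (n div 2 - 1) = n - 1" using ev n4 by auto
  then have "chain n e (n div 2, if odd (n div 2) then 1 else 2) (barRin n) (n-1, 1)"
    using chain_br_aux[of "n div 2 - 1" e] odd_n1 by (simp add: barRin_def)
  then show ?thesis unfolding barR_def using chain_rv chain_appI by blast
qed
lemma ch_barL: "chain n e (1, if e = 1 then 3 else 1) (barL n) (1, if e = 1 then 3 else 1)"
proof -
  obtain q where "chain n e (1, if e = 1 then 3 else 1) (barLout n) q"
    using chain_bl_aux[of "n div 2 - 1" e] unfolding barLout_def by blast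
  then show ?thesis unfolding barL_def using chain_rv chain_appI by blast
qed

lemma pos1: "pos n e (Suc 0) = (0,0)" using n4 by (simp add: pos_bot)
lemma posn: "pos n e n = (n-1,0)" using n4 by (simp add: pos_bot)
lemma posn1: "pos n e (Suc n) = (0,n-1)" using n4 by (simp add: pos_top)
lemma pos2n: "pos n e (2*n) = (n-1,n-1)" using n4 by (simp add: pos_top)

lemma ch1: "chain n e p [(j,s)] q \<longleftrightarrow> gEnt n e (j,s) = p \<and> gExt n e (j,s) = q" by simp

lemma ev1: "even (n - 1 + (n - 1))" "\<not> even (n - 1)" using ev n4 by auto

lemmas gsimps = gEnt_def gExt_def ctask_def addp_def cA_def pos1 posn posn1 pos2n ev1

lemma ch_D0: "chain n e (0,0) (planD0 n e) (n,n)"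
proof -
  have a: "chain n e (0,0) [(1,False)] (1,1)" by (simp add: gsimps)
  have b: "chain n e (1,1) (if e = 1 then lfUp n 1 3 @ barL n @ lfUp n 3 (n-1)
        else barL n @ lfUp n 1 3 @ lfUp n 3 (n-1)) (1,n-1)"
    using ch_lf1[of e] ch_lf2[of e] ch_barL[of e] by (auto intro!: chain_appI)
  have c: "chain n e (1,n-1) [(n+1,True),(n+1,False)] (1,n-1)" using n4 ev by (simp add: gsimps)
  have d: "chain n e (1,n-1) (rv (lfUp n 3 (n-1)) @ rv (lfUp n 1 3)) (1,1)"
    using ch_lf1[of e] ch_lf2[of e] chain_rv chain_appI by blast
  have f: "chain n e (n-1,n-1) [(2*n,False)] (n,n)" using n4 by (simp add: gsimps)
  show ?thesis unfolding planD0_def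
    by (rule chain_appI[OF a] chain_appI[OF b] chain_appI[OF c])+
       (simp only: append_assoc[symmetric], rule chain_appI[OF chain_appI[OF chain_appI[OF d ch_bot] ch_rt] f])
qed


lemma ch_D1: "chain n e (n,n) (planD1 n e) (0,0)"
proof -
  have a: "chain n e (n,n) [(2*n,True)] (n-1,n-1)" using n4 by (simp add: gsimps)
  have b: "chain n e (n-1,n-1) (rv (topR n)) (1,n-1)"
    using ch_top[of e] chain_rv by blast
  have c: "chain n e (n-1,n-1) (rv (rtUp n)) (n-1,1)" using ch_rt[of e] chain_rv by blast
  have d: "chain n e (n-1,1) [(n,False),(n,True)] (n-1,1)" using n4 ev by (simp add: gsimps)
  have f: "chain n e (n-1,1) (rv (botR n)) (1,1)" using ch_bot[of e] chain_rv by blast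
  have g: "chain n e (1,1) [(1,True)] (0,0)" by (simp add: gsimps)
  show ?thesis unfolding planD1_def
    by (rule chain_appI[OF a] chain_appI[OF b] chain_appI[OF ch_top] chain_appI[OF c]
          chain_appI[OF d] chain_appI[OF ch_barR] chain_appI[OF f] g)+
qed

lemma ch_A0: "chain n e (0,n) (planA0 n e) (n,0)"
proof -
  have a: "chain n e (0,n) [(n+1,False)] (1,n-1)" using n4 ev by (simp add: gsimps)
  have b: "chain n e (n-1,n-1) (rv (topR n)) (1,n-1)"
    using ch_top[of e] chain_rv by blast
  have c: "chain n e (1,n-1) (if e = 1 then rv (lfUp n 3 (n-1)) @ barL n @ rv (lfUp n 1 3)
      else rv (lfUp n 3 (n-1)) @ rv (lfUp n 1 3) @ barL n) (1,1)"
    using chain_rv[OF ch_lf1[of e]] chain_rv[OF ch_lf2[of e]] ch_barL[of e] by (auto intro!: chain_appI)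
  have d: "chain n e (1,1) [(1,True),(1,False)] (1,1)" by (simp add: gsimps)
  have f: "chain n e (n-1,1) [(n,False)] (n,0)" using n4 ev by (simp add: gsimps)
  show ?thesis unfolding planA0_def
    by (rule chain_appI[OF a] chain_appI[OF ch_top] chain_appI[OF b] chain_appI[OF c]
          chain_appI[OF d] chain_appI[OF ch_bot] f)+
qed

lemma ch_A1: "chain n e (n,0) (planA1 n e) (0,n)"
proof -
  have a: "chain n e (n,0) [(n,True)] (n-1,1)" using n4 ev by (simp add: gsimps)
  have b: "chain n e (n-1,n-1) [(2*n,False),(2*n,True)] (n-1,n-1)" using n4 by (simp add: gsimps)
  have c: "chain n e (n-1,n-1) (rv (rtUp n)) (n-1,1)" using ch_rt[of e] chain_rv by blast
  have f: "chain n e (n-1,1) (rv (botR n)) (1,1)" using ch_bot[of e] chain_rv by blast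
  have g: "chain n e (1,n-1) [(n+1,True)] (0,n)" using n4 ev by (simp add: gsimps)
  show ?thesis unfolding planA1_def
    by (rule chain_appI[OF a] chain_appI[OF ch_rt] chain_appI[OF b] chain_appI[OF c]
          chain_appI[OF ch_barR] chain_appI[OF f] chain_appI[OF ch_lf1] chain_appI[OF ch_lf2] g)+
qed

lemma ch_plan: "chain n e (scl n (cA t s)) (plan n t e s) (scl n (cA t (\<not> s)))"
  using ch_D0 ch_D1 ch_A0 ch_A1 by (cases t; cases s) (simp_all add: plan_def scl_def cA_def)


lemma hh: "n div 2 + n div 2 = n" using ev by auto

lemma len_plan: "length (plan n t e s) = 5*n - 6"
  using hh n4 by (cases t; cases s)
    (auto simp: plan_def planD0_def planD1_def planA0_def planA1_def botR_def topR_def lfUp_def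
      rtUp_def barRin_def barLout_def barL_def barR_def rv_def)

lemma fst_rv: "fst ` set (rv xs) = fst ` set xs"
  by (force simp: rv_def image_iff)

lemma alph_blocks: "fst ` set (botR n) \<subseteq> {1..5*n-6}" "fst ` set (topR n) \<subseteq> {1..5*n-6}"
  "fst ` set (lfUp n 1 3) \<subseteq> {1..5*n-6}" "fst ` set (lfUp n 3 (n-1)) \<subseteq> {1..5*n-6}"
  "fst ` set (rtUp n) \<subseteq> {1..5*n-6}" "fst ` set (barRin n) \<subseteq> {1..5*n-6}"
  "fst ` set (barLout n) \<subseteq> {1..5*n-6}"
  using n4 hh by (auto simp: botR_def topR_def lfUp_def rtUp_def barRin_def barLout_def)

lemma alph_plan: "fst ` set (plan n t e s) \<subseteq> {1..5*n-6}"
  using alph_blocks n4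
  by (cases t; cases s) (auto simp: plan_def planD0_def planD1_def planA0_def planA1_def
      barL_def barR_def fst_rv image_Un)

lemma mem_rv2: "(j,b) \<in> set B \<Longrightarrow> (j,s) \<in> set B \<union> set (rv B)"
  by (cases "s = b") (force simp: rv_def image_iff)+

lemma mem_botR: "2 \<le> j \<Longrightarrow> j \<le> n-1 \<Longrightarrow> (j,False) \<in> set (botR n)"
  by (auto simp: botR_def image_iff intro!: bexI[of _ "j-1"])
lemma mem_topR: "n+2 \<le> j \<Longrightarrow> j \<le> 2*n-1 \<Longrightarrow> (j,False) \<in> set (topR n)"
  by (auto simp: topR_def image_iff intro!: bexI[of _ "j-n-1"])
lemma mem_lf: "2*n+1 \<le> j \<Longrightarrow> j \<le> 3*n-2 \<Longrightarrow>
    (j, odd (j-2*n)) \<in> set (lfUp n 1 3) \<union> set (lfUp n 3 (n-1))"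
  by (cases "j - 2*n < 3") (auto simp: lfUp_def image_iff intro!: bexI[of _ "j-2*n"])
lemma mem_rt: "3*n-1 \<le> j \<Longrightarrow> j \<le> 4*n-4 \<Longrightarrow> (j, even (j+2-3*n)) \<in> set (rtUp n)"
  using n4 by (auto simp: rtUp_def image_iff intro!: bexI[of _ "j+2-3*n"])
lemma mem_br: "4*n-3 \<le> j \<Longrightarrow> j \<le> 4*n-3+(n div 2-2) \<Longrightarrow> (j,False) \<in> set (barRin n)"
  using n4 hh by (auto simp: barRin_def image_iff intro!: bexI[of _ "j-(4*n-3)"])
lemma mem_bl: "4*n+n div 2-4 \<le> j \<Longrightarrow> j \<le> 5*n-6 \<Longrightarrow> (j,False) \<in> set (barLout n)"
  using n4 hh by (auto simp: barLout_def image_iff intro!: bexI[of _ "j-(4*n+n div 2-4)"])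

lemma cover:
  assumes "1 \<le> j" "j \<le> 5*n-6"
  shows "(j,s) \<in> set (plan n t e False) \<union> set (plan n t e True)"
proof -
  let ?P = "set (plan n t e False) \<union> set (plan n t e True)"
  have sub: "set (botR n) \<union> set (rv (botR n)) \<subseteq> ?P" "set (topR n) \<union> set (rv (topR n)) \<subseteq> ?P"
    "set (lfUp n 1 3) \<union> set (rv (lfUp n 1 3)) \<subseteq> ?P"
    "set (lfUp n 3 (n-1)) \<union> set (rv (lfUp n 3 (n-1))) \<subseteq> ?P"
    "set (rtUp n) \<union> set (rv (rtUp n)) \<subseteq> ?P"
    "set (barRin n) \<union> set (rv (barRin n)) \<subseteq> ?P"
    "set (barLout n) \<union> set (rv (barLout n)) \<subseteq> ?P"
    "{(1,False),(1,True),(n,False),(n,True),(n+1,False),(n+1,True),(2*n,False),(2*n,True)} \<subseteq> ?P"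
    by (cases t; simp add: plan_def planD0_def planD1_def planA0_def planA1_def barL_def barR_def;
        blast)+
  have s8: "(j,s) \<in> ?P" if "j = 1 \<or> j = n \<or> j = n+1 \<or> j = 2*n"
    using that sub(8) by (cases s) auto
  show ?thesis
  proof (cases "j \<le> n - 1")
    case True
    then show ?thesis using s8 sub(1) mem_rv2[OF mem_botR, of j s] assms
      by (cases "j = 1") auto
  next
    case F1: False
    show ?thesis
    proof (cases "j \<le> 2*n - 1")
      case T2: True
      show ?thesis
      proof (cases "j = n \<or> j = n + 1")
        case True then show ?thesis using s8 by auto
      next
        case False
        then have n2: "n+2 \<le> j" using F1 by linarith
        show ?thesis using sub(2) mem_rv2[OF mem_topR[OF n2 T2], of s] by auto
      qed
    next
      case F2: False
      show ?thesis
      proof (cases "j \<le> 3*n - 2")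
        case T3: True
        show ?thesis
        proof (cases "j = 2*n")
          case True then show ?thesis using s8 by auto
        next
          case False
          then have j2: "2*n+1 \<le> j" using F2 by linarith
          have m: "(j, odd (j-2*n)) \<in> set (lfUp n 1 3) \<union> set (lfUp n 3 (n-1))"
            using mem_lf[OF j2 T3] .
          show ?thesis
            using m sub(3,4) mem_rv2[of j "odd (j-2*n)" "lfUp n 1 3" s]
              mem_rv2[of j "odd (j-2*n)" "lfUp n 3 (n-1)" s] by blast
        qed
      next
        case F3: False
        show ?thesis
        proof (cases "j \<le> 4*n - 4")
          case T4: True
          have j3: "3*n-1 \<le> j" using F3 n4 by linarith
          show ?thesis using sub(5) mem_rv2[OF mem_rt[OF j3 T4], of s] by blast
        next
          case F4: False
          show ?thesis
          proof (cases "j \<le> 4*n-3+(n div 2-2)")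
            case T5: True
            have j4: "4*n-3 \<le> j" using F4 n4 by linarith
            show ?thesis using sub(6) mem_rv2[OF mem_br[OF j4 T5], of s] by blast
          next
            case False
            then have "4*n+n div 2-4 \<le> j" using n4 by linarith
            then show ?thesis using sub(7) mem_rv2[OF mem_bl[OF _ assms(2)], of s] by blast
          qed
        qed
      qed
    qed
  qed
qed

end


definition rp :: "nat \<times> nat \<Rightarrow> real \<times> real" where
  "rp p = (real (fst p), real (snd p))"

lemma offs_pos:
  assumes "even n" "4 \<le> n"
  shows "offs n e j = (1 / real n) *\<^sub>R rp (pos n e j)"
proof -
  have h: "real (n div 2) = real n / 2" using assms by (auto elim!: evenE)
  have np: "real n > 0" using assms by simp
  show ?thesis
  proof (cases "1 \<le> j \<and> j \<le> n")
    case True then show ?thesis unfolding offs_def pos_def if_P[OF True] by (simp add: rp_def)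
  next
    case F1: False
    show ?thesis
    proof (cases "n + 1 \<le> j \<and> j \<le> 2*n")
      case True then show ?thesis
        unfolding offs_def pos_def if_not_P[OF F1] if_P[OF True] by (simp add: rp_def)
    next
      case F2: False
      show ?thesis
      proof (cases "2*n + 1 \<le> j \<and> j \<le> 3*n - 2")
        case True then show ?thesis
          unfolding offs_def pos_def if_not_P[OF F1] if_not_P[OF F2] if_P[OF True] by (simp add: rp_def)
      next
        case F3: False
        show ?thesis
        proof (cases "3*n - 1 \<le> j \<and> j \<le> 4*n - 4")
          case True then show ?thesis
            unfolding offs_def pos_def if_not_P[OF F1] if_not_P[OF F2] if_not_P[OF F3] if_P[OF True]
            by (simp add: rp_def)
        next
          case F4: False
          show ?thesis
          proof (cases "4*n - 3 \<le> j \<and> j \<le> 4*n - 3 + (n div 2 - 2)")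
            case True then show ?thesis
              unfolding offs_def pos_def if_not_P[OF F1] if_not_P[OF F2] if_not_P[OF F3]
                if_not_P[OF F4] if_P[OF True]
              using np h by (simp add: rp_def add_divide_distrib)
          next
            case F5: False
            show ?thesis
            proof (cases "4*n + n div 2 - 4 \<le> j \<and> j \<le> 4*n + n div 2 - 4 + (n div 2 - 2)")
              case True then show ?thesis
                unfolding offs_def pos_def if_not_P[OF F1] if_not_P[OF F2] if_not_P[OF F3]
                  if_not_P[OF F4] if_not_P[OF F5] if_P[OF True]
                by (simp add: rp_def)
            next
              case F6: False
              then show ?thesis
                unfolding offs_def pos_def if_not_P[OF F1] if_not_P[OF F2] if_not_P[OF F3]
                  if_not_P[OF F4] if_not_P[OF F5] if_not_P[OF F6]
                by (simp add: rp_def)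
            qed
          qed
        qed
      qed
    qed
  qed
qed

lemma pos_le: "4 \<le> n \<Longrightarrow> fst (pos n e j) \<le> n - 1 \<and> snd (pos n e j) \<le> n - 1"
proof -
  assume n4: "4 \<le> n"
  show ?thesis
  proof (cases "1 \<le> j \<and> j \<le> n")
    case True then show ?thesis unfolding pos_def if_P[OF True] using n4 by auto
  next
    case F1: False
    show ?thesis
    proof (cases "n + 1 \<le> j \<and> j \<le> 2*n")
      case True then show ?thesis unfolding pos_def if_not_P[OF F1] if_P[OF True] using n4 by auto
    next
      case F2: False
      show ?thesis
      proof (cases "2*n + 1 \<le> j \<and> j \<le> 3*n - 2")
        case True then show ?thesis
          unfolding pos_def if_not_P[OF F1] if_not_P[OF F2] if_P[OF True] using n4 by auto
      next
        case F3: False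
        show ?thesis
        proof (cases "3*n - 1 \<le> j \<and> j \<le> 4*n - 4")
          case True then show ?thesis
            unfolding pos_def if_not_P[OF F1] if_not_P[OF F2] if_not_P[OF F3] if_P[OF True]
            using n4 by auto
        next
          case F4: False
          show ?thesis
          proof (cases "4*n - 3 \<le> j \<and> j \<le> 4*n - 3 + (n div 2 - 2)")
            case True then show ?thesis
              unfolding pos_def if_not_P[OF F1] if_not_P[OF F2] if_not_P[OF F3]
                if_not_P[OF F4] if_P[OF True]
              using n4 by auto
          next
            case F5: False
            show ?thesis
            proof (cases "4*n + n div 2 - 4 \<le> j \<and> j \<le> 4*n + n div 2 - 4 + (n div 2 - 2)")
              case True then show ?thesis
                unfolding pos_def if_not_P[OF F1] if_not_P[OF F2] if_not_P[OF F3]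
                  if_not_P[OF F4] if_not_P[OF F5] if_P[OF True]
                using n4 by auto
            next
              case F6: False
              then show ?thesis
                unfolding pos_def if_not_P[OF F1] if_not_P[OF F2] if_not_P[OF F3]
                  if_not_P[OF F4] if_not_P[OF F5] if_not_P[OF F6]
                by auto
            qed
          qed
        qed
      qed
    qed
  qed
qed

lemma phi_aux_snoc: "phi_aux n eta p (w @ [j]) = phi_aux n eta p w \<circ> psi n (eta (p @ w)) j"
  by (induction w arbitrary: p) auto

lemma phi_snoc: "phi n eta (w @ [j]) = phi n eta w \<circ> psi n (eta w) j"
  by (simp add: phi_def phi_aux_snoc)

lemma phi_aux_affine:
  "phi_aux n eta p w x = (1 / real n ^ length w) *\<^sub>R x + phi_aux n eta p w 0"
proof (induction w arbitrary: p x)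
  case Nil then show ?case by simp
next
  case (Cons i w)
  let ?c = "phi_aux n eta (p @ [i]) w 0"
  have "phi_aux n eta p (i # w) x = psi n (eta p) i (phi_aux n eta (p @ [i]) w x)" by simp
  also have "\<dots> = psi n (eta p) i ((1 / real n ^ length w) *\<^sub>R x + ?c)"
    by (subst Cons.IH[of "p @ [i]" x]) (rule refl)
  also have "\<dots> = (1 / real n ^ length (i # w)) *\<^sub>R x + psi n (eta p) i ?c"
    by (simp add: psi_def scaleR_add_right)
  also have "psi n (eta p) i ?c = phi_aux n eta p (i # w) 0" by simp
  finally show ?case .
qed

lemma phi_affine: "phi n eta w x = (1 / real n ^ length w) *\<^sub>R x + phi n eta w 0"
  unfolding phi_def by (rule phi_aux_affine)

lemma dist_phi: "dist (phi n eta w x) (phi n eta w y) = dist x y / real n ^ length w"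
proof -
  have "dist (phi n eta w x) (phi n eta w y) = norm ((1 / real n ^ length w) *\<^sub>R (x - y))"
    by (subst (1 2) phi_affine) (simp add: dist_norm algebra_simps)
  also have "\<dots> = dist x y / real n ^ length w" by (simp add: dist_norm)
  finally show ?thesis .
qed

lemma unit_sq_mem: "(a, b) \<in> unit_square \<longleftrightarrow> 0 \<le> a \<and> a \<le> 1 \<and> 0 \<le> b \<and> b \<le> 1"
  by (simp add: unit_square_def)

lemma dist_unit_sq: "x \<in> unit_square \<Longrightarrow> y \<in> unit_square \<Longrightarrow> dist x y \<le> sqrt 2"
proof -
  assume x: "x \<in> unit_square" and y: "y \<in> unit_square"
  obtain a b c d where xy: "x = (a,b)" "y = (c,d)" by (cases x, cases y)
  have "dist a c \<le> 1" "dist b d \<le> 1" using x y xy by (auto simp: unit_sq_mem dist_real_def)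
  then have "(dist a c)\<^sup>2 \<le> 1" "(dist b d)\<^sup>2 \<le> 1"
    using power_le_one[of "dist a c" 2] power_le_one[of "dist b d" 2] by auto
  then have "(dist a c)\<^sup>2 + (dist b d)\<^sup>2 \<le> 2" by linarith
  then show ?thesis using xy by (simp add: dist_Pair_Pair)
qed

lemma psi_unit_sq:
  assumes "even n" "4 \<le> n" "x \<in> unit_square"
  shows "psi n e j x \<in> unit_square"
proof -
  obtain a b where x: "x = (a,b)" by (cases x)
  have ab: "0 \<le> a" "a \<le> 1" "0 \<le> b" "b \<le> 1" using assms(3) x by (auto simp: unit_sq_mem)
  have p: "real (fst (pos n e j)) + 1 \<le> real n" "real (snd (pos n e j)) + 1 \<le> real n"
    using pos_le[OF assms(2), of e j] assms(2) by linarith+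
  have np: "real n > 0" using assms by simp
  have eq: "psi n e j x = ((a + real (fst (pos n e j))) / real n, (b + real (snd (pos n e j))) / real n)"
    unfolding psi_def offs_pos[OF assms(1,2)] x rp_def by (simp add: add_divide_distrib)
  have "(a + real (fst (pos n e j))) / real n \<le> 1" "(b + real (snd (pos n e j))) / real n \<le> 1"
    using ab p np by (simp_all add: divide_le_eq_1)
  moreover have "0 \<le> (a + real (fst (pos n e j))) / real n" "0 \<le> (b + real (snd (pos n e j))) / real n"
    using ab np by simp_all
  ultimately show ?thesis unfolding eq unit_sq_mem by simp
qed


fun st :: "nat \<Rightarrow> (nat list \<Rightarrow> nat) \<Rightarrow> nat \<Rightarrow> nat \<Rightarrow> nat list \<times> bool \<times> bool" where
  "st n eta 0 k = ([], True, k = 1)"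
| "st n eta (Suc m) k = (let S = st n eta m (k div (5*n-6)); w = fst S;
      v = plan n (fst (snd S)) (eta w) (snd (snd S)) ! (k mod (5*n-6))
    in (w @ [fst v], ctask n (eta w) (fst v), snd v))"

definition ent :: "nat \<Rightarrow> (nat list \<Rightarrow> nat) \<Rightarrow> nat \<Rightarrow> nat \<Rightarrow> real \<times> real" where
  "ent n eta m k = phi n eta (fst (st n eta m k)) (rp (cA (fst (snd (st n eta m k))) (snd (snd (st n eta m k)))))"
definition ex :: "nat \<Rightarrow> (nat list \<Rightarrow> nat) \<Rightarrow> nat \<Rightarrow> nat \<Rightarrow> real \<times> real" where
  "ex n eta m k = phi n eta (fst (st n eta m k)) (rp (cA (fst (snd (st n eta m k))) (\<not> snd (snd (st n eta m k)))))"
definition sqr :: "nat \<Rightarrow> (nat list \<Rightarrow> nat) \<Rightarrow> nat \<Rightarrow> nat \<Rightarrow> (real \<times> real) set" where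
  "sqr n eta m k = phi n eta (fst (st n eta m k)) ` unit_square"

lemma chain_nth: "chain n e p L q \<Longrightarrow> Suc d < length L \<Longrightarrow> gExt n e (L!d) = gEnt n e (L!Suc d)"
proof (induction L arbitrary: p d)
  case Nil then show ?case by simp
next
  case (Cons v L)
  show ?case
  proof (cases d)
    case 0 then show ?thesis using Cons.prems by (cases L) auto
  next
    case (Suc d') then show ?thesis using Cons.prems Cons.IH[of "gExt n e v" d'] by auto
  qed
qed

lemma chain_hd: "chain n e p L q \<Longrightarrow> L \<noteq> [] \<Longrightarrow> gEnt n e (L!0) = p"
  by (cases L) auto

lemma chain_last: "chain n e p L q \<Longrightarrow> L \<noteq> [] \<Longrightarrow> gExt n e (L!(length L - 1)) = q"
proof (induction L arbitrary: p)
  case Nil then show ?case by simp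
next
  case (Cons v L)
  show ?case
  proof (cases L)
    case Nil then show ?thesis using Cons.prems by simp
  next
    case (Cons v' L') then show ?thesis using Cons.prems Cons.IH[of "gExt n e v"] by auto
  qed
qed

lemma rp_addp: "rp (addp a b) = rp a + rp b" by (simp add: rp_def addp_def)

lemma phi_nil: "phi n eta [] = id" by (simp add: phi_def)

context fixes n :: nat and eta :: "nat list \<Rightarrow> nat" assumes ev: "even n" and n4: "4 \<le> n"
begin

lemma NN_gt: "5*n - 6 > 1" using n4 by simp

lemma psi_rp: "psi n e j (rp c) = (1 / real n) *\<^sub>R rp (addp (pos n e j) c)"
  by (simp add: psi_def offs_pos[OF ev n4] rp_addp scaleR_add_right add.commute)

lemma scl_rp: "(1 / real n) *\<^sub>R rp (scl n c) = rp c"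
  using n4 by (simp add: scl_def rp_def)

lemma st_Suc_eq:
  assumes "st n eta m (k div (5*n-6)) = (w, t, s)"
    and "plan n t (eta w) s ! (k mod (5*n-6)) = (j, s')"
  shows "st n eta (Suc m) k = (w @ [j], ctask n (eta w) j, s')"
  using assms by (simp add: Let_def)

lemma link:
  assumes "st n eta m (k div (5*n-6)) = (w, t, s)"
    and "plan n t (eta w) s ! (k mod (5*n-6)) = v"
  shows "ent n eta (Suc m) k = phi n eta w ((1 / real n) *\<^sub>R rp (gEnt n (eta w) v))"
    and "ex n eta (Suc m) k = phi n eta w ((1 / real n) *\<^sub>R rp (gExt n (eta w) v))"
proof -
  obtain j s' where v: "v = (j, s')" by (cases v)
  have S: "st n eta (Suc m) k = (w @ [j], ctask n (eta w) j, s')"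
    using st_Suc_eq[OF assms(1)] assms(2) v by blast
  show "ent n eta (Suc m) k = phi n eta w ((1 / real n) *\<^sub>R rp (gEnt n (eta w) v))"
    unfolding ent_def S using v by (simp add: phi_snoc psi_rp gEnt_def)
  show "ex n eta (Suc m) k = phi n eta w ((1 / real n) *\<^sub>R rp (gExt n (eta w) v))"
    unfolding ex_def S using v by (simp add: phi_snoc psi_rp gExt_def)
qed

lemma consec: "Suc k < 2 * (5*n-6)^m \<Longrightarrow> ex n eta m k = ent n eta m (Suc k)"
proof (induction m arbitrary: k)
  case 0
  then have "k = 0" by simp
  then show ?case by (simp add: ex_def ent_def phi_nil cA_def)
next
  case (Suc m)
  define N where "N = 5*n - 6"
  have N1: "N > 1" using NN_gt N_def by simp
  obtain w t s where S: "st n eta m (k div N) = (w, t, s)" by (metis prod.exhaust)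
  define L where "L = plan n t (eta w) s"
  have lenL: "length L = N" using len_plan[OF ev n4] L_def N_def by simp
  have chL: "chain n (eta w) (scl n (cA t s)) L (scl n (cA t (\<not> s)))"
    using ch_plan[OF ev n4] L_def by simp
  have dlt: "k mod N < N" using N1 by simp
  show ?case
  proof (cases "Suc (k mod N) < N")
    case True
    have d1: "Suc k div N = k div N" "Suc k mod N = Suc (k mod N)"
      using True by (simp_all add: div_Suc mod_Suc)
    have "ex n eta (Suc m) k = phi n eta w ((1 / real n) *\<^sub>R rp (gExt n (eta w) (L ! (k mod N))))"
      using link(2)[of m k w t s] S L_def N_def by simp
    also have "gExt n (eta w) (L ! (k mod N)) = gEnt n (eta w) (L ! Suc (k mod N))"
      using chain_nth[OF chL] True lenL by simp
    also have "phi n eta w ((1 / real n) *\<^sub>R rp (gEnt n (eta w) (L ! Suc (k mod N))))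
        = ent n eta (Suc m) (Suc k)"
      using link(1)[of m "Suc k" w t s] S L_def N_def d1 by simp
    finally show ?thesis .
  next
    case False
    then have dN: "k mod N = N - 1" using dlt by simp
    have d1: "Suc k div N = Suc (k div N)" "Suc k mod N = 0"
      using False dlt by (simp_all add: div_Suc mod_Suc)
    have kk: "Suc k = N * Suc (k div N)"
      using dN N1 div_mult_mod_eq[of k N] by (simp add: algebra_simps)
    have lt: "Suc (k div N) < 2 * N ^ m"
    proof -
      have "N * Suc (k div N) < N * (2 * N ^ m)"
        using Suc.prems kk N_def by (simp add: algebra_simps)
      then show ?thesis using N1 by (metis mult_less_cancel1)
    qed
    have "ex n eta (Suc m) k = phi n eta w ((1 / real n) *\<^sub>R rp (gExt n (eta w) (L ! (k mod N))))"
      using link(2)[of m k w t s] S L_def N_def by simp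
    also have "gExt n (eta w) (L ! (k mod N)) = scl n (cA t (\<not> s))"
    proof -
      have "L \<noteq> []" using lenL N1 by auto
      then show ?thesis using chain_last[OF chL] dN lenL by simp
    qed
    also have "phi n eta w ((1 / real n) *\<^sub>R rp (scl n (cA t (\<not> s)))) = ex n eta m (k div N)"
      using S by (simp add: scl_rp ex_def)
    also have "\<dots> = ent n eta m (Suc (k div N))" using Suc.IH lt N_def by simp
    also have "\<dots> = ent n eta (Suc m) (Suc k)"
    proof -
      obtain w' t' s' where S': "st n eta m (Suc (k div N)) = (w', t', s')" by (metis prod.exhaust)
      define L' where "L' = plan n t' (eta w') s'"
      have lenL': "length L' = N" using len_plan[OF ev n4] L'_def N_def by simp
      have chL': "chain n (eta w') (scl n (cA t' s')) L' (scl n (cA t' (\<not> s')))"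
        using ch_plan[OF ev n4] L'_def by simp
      have "ent n eta (Suc m) (Suc k) = phi n eta w' ((1 / real n) *\<^sub>R rp (gEnt n (eta w') (L' ! 0)))"
        using link(1)[of m "Suc k" w' t' s'] S' L'_def N_def d1 by simp
      also have "gEnt n (eta w') (L' ! 0) = scl n (cA t' s')"
      proof -
        have "L' \<noteq> []" using lenL' N1 by auto
        then show ?thesis using chain_hd[OF chL'] by simp
      qed
      finally show ?thesis using S' by (simp add: scl_rp ent_def)
    qed
    finally show ?thesis .
  qed
qed

end


definition idx :: "nat \<Rightarrow> nat \<Rightarrow> real \<Rightarrow> nat" where
  "idx n m t = min (nat \<lfloor>real (2 * (5*n-6)^m) * t\<rfloor>) (2 * (5*n-6)^m - 1)"

definition fc :: "nat \<Rightarrow> (nat list \<Rightarrow> nat) \<Rightarrow> real \<Rightarrow> real \<times> real" where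
  "fc n eta t = lim (\<lambda>m. ent n eta m (idx n m t))"

lemma floor_div_nat:
  assumes "0 \<le> x" "0 < N"
  shows "nat \<lfloor>real N * x\<rfloor> div N = nat \<lfloor>x\<rfloor>"
proof -
  define q where "q = nat \<lfloor>x\<rfloor>"
  have q1: "real q \<le> x" "x < real q + 1" using assms(1) q_def by linarith+
  have 1: "int (N*q) \<le> \<lfloor>real N * x\<rfloor>"
    using q1 assms(2) by (subst le_floor_iff) (simp add: mult_left_mono)
  have "real N * x < real N * (real q + 1)"
    using q1 assms(2) by (intro mult_strict_left_mono) auto
  then have 2: "\<lfloor>real N * x\<rfloor> < int (N * Suc q)"
    by (subst floor_less_iff) (simp add: algebra_simps)
  have "N * q \<le> nat \<lfloor>real N * x\<rfloor>" using 1 by linarith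
  moreover have "nat \<lfloor>real N * x\<rfloor> < N * Suc q" using 2 1 by linarith
  ultimately show ?thesis unfolding q_def[symmetric] by (rule div_nat_eqI)
qed

lemma min_div: "min a b div (N::nat) = min (a div N) (b div N)"
proof (cases "a \<le> b")
  case True then show ?thesis using div_le_mono[OF True, of N] by (simp add: min_absorb1)
next
  case False then have ba: "b \<le> a" by simp
  show ?thesis using div_le_mono[OF ba, of N] ba by (simp add: min_absorb2)
qed

context fixes n :: nat assumes ev: "even n" and n4: "4 \<le> n"
begin

lemma N1': "5*n - 6 > 1" using n4 by simp

lemma idx_lt: "idx n m t < 2 * (5*n-6)^m"
proof -
  have "2 * (5*n-6)^m > 0" using n4 by simp
  then show ?thesis unfolding idx_def by linarith
qed

lemma idx_div: "0 \<le> t \<Longrightarrow> idx n (Suc m) t div (5*n-6) = idx n m t"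
proof -
  assume t: "0 \<le> t"
  define N where "N = 5*n - 6"
  define M where "M = 2 * N^m"
  have N1: "N > 1" using N1' N_def by simp
  have M1: "M \<ge> 1" using N1 M_def by simp
  have eq: "real (2 * N ^ Suc m) * t = real N * (real M * t)" by (simp add: M_def algebra_simps)
  have a: "nat \<lfloor>real (2 * N ^ Suc m) * t\<rfloor> div N = nat \<lfloor>real M * t\<rfloor>"
    unfolding eq using floor_div_nat[of "real M * t" N] t N1 by simp
  have b: "(2 * N ^ Suc m - 1) div N = M - 1"
  proof (rule div_nat_eqI)
    show "N * (M - 1) \<le> 2 * N ^ Suc m - 1" using N1 M1 by (simp add: M_def algebra_simps)
    show "2 * N ^ Suc m - 1 < N * Suc (M - 1)" using N1 M1 by (simp add: M_def algebra_simps)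
  qed
  show ?thesis unfolding idx_def N_def[symmetric] M_def[symmetric] min_div a b by simp
qed

lemma idx_of: "k < 2 * (5*n-6)^m \<Longrightarrow> idx n m (real k / real (2 * (5*n-6)^m)) = k"
proof -
  assume k: "k < 2 * (5*n-6)^m"
  define M where "M = real (2 * (5*n-6)^m)"
  have "M > 0" using n4 M_def by simp
  then have "M * (real k / M) = real k" by simp
  then show ?thesis unfolding idx_def M_def[symmetric] using k by simp
qed

lemma idx_step:
  assumes "0 \<le> s" "s \<le> t" "(t - s) * real (2 * (5*n-6)^m) \<le> 1"
  shows "idx n m t \<le> Suc (idx n m s)"
proof -
  define M where "M = real (2 * (5*n-6)^m)"
  have "M * t \<le> M * s + 1" using assms(3) M_def by (simp add: algebra_simps)
  then have "\<lfloor>M * t\<rfloor> \<le> \<lfloor>M * s\<rfloor> + 1" by (metis floor_add_int floor_mono of_int_1)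
  moreover have "0 \<le> \<lfloor>M * s\<rfloor>" using assms(1) M_def by simp
  ultimately have "nat \<lfloor>M * t\<rfloor> \<le> Suc (nat \<lfloor>M * s\<rfloor>)" by linarith
  then show ?thesis unfolding idx_def M_def[symmetric] by linarith
qed

lemma idx_mono: "s \<le> t \<Longrightarrow> idx n m s \<le> idx n m t"
  unfolding idx_def by (intro min.mono nat_mono floor_mono mult_left_mono) auto

end


context fixes n :: nat and eta :: "nat list \<Rightarrow> nat" assumes ev: "even n" and n4: "4 \<le> n"
begin

lemma st_len: "length (fst (st n eta m k)) = m"
  by (induction m arbitrary: k) (simp_all add: Let_def)

lemma plan_nth_alph: "fst (plan n t e s ! (k mod (5*n-6))) \<in> alph n"
proof -
  have "k mod (5*n-6) < length (plan n t e s)" using len_plan[OF ev n4] n4 by simp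
  then have "fst (plan n t e s ! (k mod (5*n-6))) \<in> fst ` set (plan n t e s)" by simp
  then show ?thesis using alph_plan[OF ev n4, of t e s] unfolding alph_def by blast
qed

lemma st_alph: "set (fst (st n eta m k)) \<subseteq> alph n"
proof (induction m arbitrary: k)
  case 0 then show ?case by simp
next
  case (Suc m) then show ?case using plan_nth_alph by (simp add: Let_def)
qed

lemma sqr_Suc: "sqr n eta (Suc m) k \<subseteq> sqr n eta m (k div (5*n-6))"
proof -
  obtain w t s where S: "st n eta m (k div (5*n-6)) = (w, t, s)" by (metis prod.exhaust)
  obtain j s' where v: "plan n t (eta w) s ! (k mod (5*n-6)) = (j, s')" by (metis prod.exhaust)
  have S': "st n eta (Suc m) k = (w @ [j], ctask n (eta w) j, s')"
    using st_Suc_eq[OF ev n4 S v] .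
  have "psi n (eta w) j ` unit_square \<subseteq> unit_square" using psi_unit_sq[OF ev n4] by blast
  then show ?thesis unfolding sqr_def S S' by (auto simp: phi_snoc image_comp[symmetric])
qed

lemma cA_unit: "rp (cA t s) \<in> unit_square"
  by (auto simp: cA_def rp_def unit_sq_mem)

lemma ent_sqr: "ent n eta m k \<in> sqr n eta m k"
  unfolding ent_def sqr_def using cA_unit by blast
lemma ex_sqr: "ex n eta m k \<in> sqr n eta m k"
  unfolding ex_def sqr_def using cA_unit by blast

lemma sqr_dist: "x \<in> sqr n eta m k \<Longrightarrow> y \<in> sqr n eta m k \<Longrightarrow> dist x y \<le> sqrt 2 / real n ^ m"
proof -
  assume "x \<in> sqr n eta m k" "y \<in> sqr n eta m k"
  then obtain a b where ab: "a \<in> unit_square" "b \<in> unit_square"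
    "x = phi n eta (fst (st n eta m k)) a" "y = phi n eta (fst (st n eta m k)) b"
    unfolding sqr_def by blast
  have "dist x y = dist a b / real n ^ m" using ab by (simp add: dist_phi st_len)
  also have "\<dots> \<le> sqrt 2 / real n ^ m"
    using dist_unit_sq[OF ab(1,2)] n4 by (simp add: divide_right_mono)
  finally show ?thesis .
qed

lemma sqr_closed: "closed (sqr n eta m k)"
proof -
  define w where "w = fst (st n eta m k)"
  define c where "c = phi n eta w 0"
  have eq: "phi n eta w = (\<lambda>x. (1 / real n ^ length w) *\<^sub>R x + c)"
    unfolding c_def by (rule ext) (rule phi_affine)
  have "sqr n eta m k = (\<lambda>x. (1 / real n ^ length w) *\<^sub>R x + c) ` unit_square"
    unfolding sqr_def w_def[symmetric] eq ..
  moreover have "compact \<dots>"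
    unfolding unit_square_def
    by (intro compact_continuous_image continuous_intros compact_cbox)
  ultimately show ?thesis using compact_imp_closed by simp
qed

lemma sqr_nest: "m \<le> m' \<Longrightarrow> 0 \<le> t \<Longrightarrow> sqr n eta m' (idx n m' t) \<subseteq> sqr n eta m (idx n m t)"
proof (induction m' rule: dec_induct)
  case base then show ?case by simp
next
  case (step m')
  have "sqr n eta (Suc m') (idx n (Suc m') t) \<subseteq> sqr n eta m' (idx n (Suc m') t div (5*n-6))"
    by (rule sqr_Suc)
  also have "idx n (Suc m') t div (5*n-6) = idx n m' t" using idx_div[OF ev n4] step by simp
  finally show ?case using step by blast
qed

lemma small_pow: "e > 0 \<Longrightarrow> \<exists>M. sqrt 2 / real n ^ M < e"
proof -
  assume e: "e > 0"
  have "1 < real n" using n4 by simp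
  then obtain M where "sqrt 2 / e < real n ^ M" using real_arch_pow by blast
  then show ?thesis using e n4 by (intro exI[of _ M]) (simp add: field_simps)
qed

lemma pow_anti: "M \<le> m \<Longrightarrow> sqrt 2 / real n ^ m \<le> sqrt 2 / real n ^ M"
  using n4 by (intro divide_left_mono power_increasing) auto

lemma conv: "0 \<le> t \<Longrightarrow> convergent (\<lambda>m. ent n eta m (idx n m t))"
proof -
  assume t: "0 \<le> t"
  have "Cauchy (\<lambda>m. ent n eta m (idx n m t))"
  proof (rule metric_CauchyI)
    fix e :: real assume e: "0 < e"
    obtain M where M: "sqrt 2 / real n ^ M < e" using small_pow[OF e] by blast
    have "dist (ent n eta a (idx n a t)) (ent n eta b (idx n b t)) < e" if "M \<le> a" "M \<le> b" for a b
    proof -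
      have *: "dist (ent n eta a (idx n a t)) (ent n eta b (idx n b t)) \<le> sqrt 2 / real n ^ min a b"
      proof (cases "a \<le> b")
        case True
        have "ent n eta b (idx n b t) \<in> sqr n eta a (idx n a t)"
          using sqr_nest[OF True t] ent_sqr by blast
        then show ?thesis using sqr_dist[OF ent_sqr] True by (simp add: min_absorb1)
      next
        case False
        have "ent n eta a (idx n a t) \<in> sqr n eta b (idx n b t)"
          using sqr_nest[of b a t] t False ent_sqr by auto
        then show ?thesis using sqr_dist[OF _ ent_sqr] False by (simp add: min_absorb2)
      qed
      have "sqrt 2 / real n ^ min a b \<le> sqrt 2 / real n ^ M" using that by (intro pow_anti) simp
      then show ?thesis using * M by linarith
    qed
    then show "\<exists>M. \<forall>a\<ge>M. \<forall>b\<ge>M. dist (ent n eta a (idx n a t)) (ent n eta b (idx n b t)) < e"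
      by blast
  qed
  then show ?thesis by (simp add: Cauchy_convergent_iff)
qed

lemma fc_sqr: "0 \<le> t \<Longrightarrow> fc n eta t \<in> sqr n eta m (idx n m t)"
proof -
  assume t: "0 \<le> t"
  have lim: "(\<lambda>m. ent n eta m (idx n m t)) \<longlonglongrightarrow> fc n eta t"
    using conv[OF t] unfolding fc_def by (simp add: convergent_LIMSEQ_iff)
  have ev1: "eventually (\<lambda>m'. ent n eta m' (idx n m' t) \<in> sqr n eta m (idx n m t)) sequentially"
    using sqr_nest[OF _ t] ent_sqr unfolding eventually_sequentially by blast
  show ?thesis using Lim_in_closed_set[OF sqr_closed ev1 _ lim] by simp
qed

end


context fixes n :: nat and eta :: "nat list \<Rightarrow> nat" assumes ev: "even n" and n4: "4 \<le> n"
begin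

definition gg :: real where "gg = 1 / (ln (real (5*n - 6)) / ln (real n))"

lemma gg_facts: "0 < gg" "gg \<le> 1" "real (5*n-6) powr gg = real n"
proof -
  have n1: "1 < real n" using n4 by simp
  have nN: "real n \<le> real (5*n-6)" using n4 by simp
  have N1: "1 < real (5*n-6)" using n1 nN by linarith
  have ln1: "0 < ln (real n)" using n1 by simp
  have lnN: "0 < ln (real (5*n-6))" using N1 by simp
  have lnle: "ln (real n) \<le> ln (real (5*n-6))" using nN n1 by simp
  have g: "gg = ln (real n) / ln (real (5*n-6))" unfolding gg_def by simp
  show "0 < gg" unfolding g using ln1 lnN by simp
  show "gg \<le> 1" unfolding g using lnle lnN by simp
  have "real (5*n-6) powr gg = exp (gg * ln (real (5*n-6)))" using N1 by (simp add: powr_def)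
  also have "gg * ln (real (5*n-6)) = ln (real n)" unfolding g using lnN by simp
  finally show "real (5*n-6) powr gg = real n" using n1 by simp
qed

lemma pow_powr: "(real (2 * (5*n-6) ^ Suc m)) powr gg \<le> 2 * real n ^ Suc m"
proof -
  define Nr where "Nr = real (5*n-6)"
  have N0: "0 < Nr" using n4 Nr_def by simp
  have "(real (2 * (5*n-6) ^ Suc m)) powr gg = 2 powr gg * (Nr ^ Suc m) powr gg"
    unfolding Nr_def by (simp add: powr_mult)
  also have "(Nr ^ Suc m) powr gg = real n ^ Suc m"
  proof -
    have "(Nr ^ Suc m) powr gg = (Nr powr real (Suc m)) powr gg"
      by (subst powr_realpow[OF N0]) (rule refl)
    also have "\<dots> = (Nr powr gg) powr real (Suc m)" by (simp add: powr_powr mult.commute)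
    also have "\<dots> = real n powr real (Suc m)" using gg_facts(3) Nr_def by simp
    also have "\<dots> = real n ^ Suc m" using n4 by (subst powr_realpow) auto
    finally show ?thesis .
  qed
  also have "2 powr gg \<le> 2" using powr_mono[OF gg_facts(2), of 2] by simp
  then have "2 powr gg * real n ^ Suc m \<le> 2 * real n ^ Suc m" by (simp add: mult_right_mono)
  finally show ?thesis .
qed

lemma sqr0: "sqr n eta 0 k = unit_square" by (simp add: sqr_def phi_nil)

lemma holder_lt:
  assumes "0 \<le> s" "s < t" "t \<le> 1"
  shows "dist (fc n eta s) (fc n eta t) \<le> 8 * real n * (t - s) powr gg"
proof -
  define N where "N = 5*n - 6"
  define d where "d = t - s"
  have d0: "0 < d" using assms d_def by simp
  have N1: "1 < real N" using n4 N_def by simp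
  define P where "P = (\<lambda>m. 1 < real (2 * N ^ Suc m) * d)"
  have exP: "\<exists>m. P m"
  proof -
    obtain k where k: "1 / (2 * d) < real N ^ k" using real_arch_pow[OF N1] by blast
    have kk: "real N ^ k \<le> real N ^ Suc k" using N1 by simp
    have "1 < d * (2 * real N ^ k)" using k d0 by (simp add: field_simps)
    also have "\<dots> \<le> d * (2 * real N ^ Suc k)" using kk d0 by (intro mult_left_mono) auto
    finally have "1 < real (2 * N ^ Suc k) * d" by (simp add: mult.commute)
    then show ?thesis unfolding P_def by blast
  qed
  define m where "m = (LEAST m. P m)"
  have Pm: "P m" unfolding m_def using LeastI_ex[OF exP] .
  have alt: "m = 0 \<or> real (2 * N ^ m) * d \<le> 1"
  proof (cases m)
    case 0 then show ?thesis by simp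
  next
    case (Suc m')
    then have "\<not> P m'" using not_less_Least[of m' P] m_def by simp
    then show ?thesis unfolding P_def Suc by simp
  qed
  have s1: "0 \<le> s" "0 \<le> t" using assms by auto
  have A: "dist (fc n eta s) (fc n eta t) \<le> 2 * sqrt 2 / real n ^ m"
  proof (cases "m = 0")
    case True
    have "dist (fc n eta s) (fc n eta t) \<le> sqrt 2"
      using fc_sqr[OF ev n4 s1(1), where eta=eta and m=0] fc_sqr[OF ev n4 s1(2), where eta=eta and m=0] by (simp add: sqr0 dist_unit_sq)
    moreover have "sqrt 2 \<le> 2 * sqrt 2" by simp
    ultimately have "dist (fc n eta s) (fc n eta t) \<le> 2 * sqrt 2" by linarith
    then show ?thesis using True by simp
  next
    case False
    then have dm: "(t - s) * real (2 * (5*n-6) ^ m) \<le> 1" using alt d_def N_def by (simp add: mult.commute)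
    define a where "a = idx n m s"
    define b where "b = idx n m t"
    have ab: "a \<le> b" "b \<le> Suc a" unfolding a_def b_def
      using idx_mono[OF ev n4] idx_step[OF ev n4 s1(1) _ dm] assms by auto
    have fs: "fc n eta s \<in> sqr n eta m a" using fc_sqr[OF ev n4 s1(1)] a_def by simp
    have ft: "fc n eta t \<in> sqr n eta m b" using fc_sqr[OF ev n4 s1(2)] b_def by simp
    show ?thesis
    proof (cases "b = a")
      case True
      then have "dist (fc n eta s) (fc n eta t) \<le> sqrt 2 / real n ^ m"
        using sqr_dist[OF ev n4 fs] ft by simp
      moreover have "sqrt 2 / real n ^ m \<le> 2 * sqrt 2 / real n ^ m" using n4 by (simp add: divide_right_mono)
      ultimately show ?thesis by linarith
    next
      case False
      then have b: "b = Suc a" using ab by simp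
      have "b < 2 * (5*n-6)^m" using idx_lt[OF ev n4] b_def by simp
      then have eq: "ex n eta m a = ent n eta m b" using consec[OF ev n4] b by simp
      have "dist (fc n eta s) (fc n eta t) \<le> dist (fc n eta s) (ex n eta m a) + dist (ent n eta m b) (fc n eta t)"
        using dist_triangle[of "fc n eta s" "fc n eta t" "ex n eta m a"] eq by (simp add: dist_commute)
      also have "\<dots> \<le> sqrt 2 / real n ^ m + sqrt 2 / real n ^ m"
        using sqr_dist[OF ev n4 fs ex_sqr[OF ev n4]] sqr_dist[OF ev n4 ent_sqr[OF ev n4] ft]
        by (intro add_mono) auto
      finally show ?thesis by simp
    qed
  qed
  have B: "1 / real n ^ m \<le> 2 * real n * d powr gg"
  proof -
    define X where "X = real (2 * N ^ Suc m)"
    have X0: "0 < X" using N1 X_def by simp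
    have dX: "1 / X \<le> d" using Pm X0 unfolding P_def X_def[symmetric] by (simp add: field_simps)
    have "(1 / X) powr gg \<le> d powr gg" using dX X0 gg_facts(1) by (intro powr_mono2) auto
    moreover have "(1 / X) powr gg = 1 / X powr gg" by (simp add: powr_divide)
    moreover have le2: "X powr gg \<le> 2 * real n ^ Suc m" using pow_powr[of m] X_def N_def by simp
    moreover have pos: "0 < X powr gg" using X0 by simp
    moreover have "1 / (2 * real n ^ Suc m) \<le> 1 / X powr gg"
    proof (rule divide_left_mono)
      show "0 < 2 * real n ^ Suc m * X powr gg" using pos n4 by simp
    qed (use le2 in auto)
    ultimately have "1 / (2 * real n ^ Suc m) \<le> d powr gg" by linarith
    then show ?thesis using n4 by (simp add: field_simps)
  qed
  have "dist (fc n eta s) (fc n eta t) \<le> 2 * sqrt 2 * (1 / real n ^ m)" using A by simp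
  also have "\<dots> \<le> 2 * sqrt 2 * (2 * real n * d powr gg)" using B by (intro mult_left_mono) auto
  also have "\<dots> \<le> 8 * real n * d powr gg"
  proof -
    have "sqrt 2 \<le> 2" using sqrt2_less_2 by simp
    then show ?thesis using n4 by (simp add: mult_right_mono)
  qed
  finally show ?thesis unfolding d_def .
qed

end


context fixes n :: nat and eta :: "nat list \<Rightarrow> nat" assumes ev: "even n" and n4: "4 \<le> n"
begin

lemma cover_st: "set w \<subseteq> alph n \<Longrightarrow>
  \<exists>t. \<forall>s. \<exists>k < 2 * (5*n-6) ^ length w. st n eta (length w) k = (w, t, s)"
proof (induction w rule: rev_induct)
  case Nil
  show ?case
  proof (rule exI[of _ True], rule allI)
    fix s
    show "\<exists>k < 2 * (5*n-6) ^ length []. st n eta (length []) k = ([], True, s)"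
    proof (cases s)
      case True then show ?thesis by (intro exI[of _ "1::nat"]) simp
    next
      case False then show ?thesis by (intro exI[of _ "0::nat"]) simp
    qed
  qed
next
  case (snoc x xs)
  define N where "N = 5*n - 6"
  have N1: "1 < N" using n4 N_def by simp
  have xs: "set xs \<subseteq> alph n" and x: "x \<in> alph n" using snoc.prems by auto
  obtain t where t: "\<forall>s. \<exists>k < 2 * N ^ length xs. st n eta (length xs) k = (xs, t, s)"
    using snoc.IH[OF xs] N_def by blast
  show ?case
  proof (rule exI[of _ "ctask n (eta xs) x"], rule allI)
    fix s'
    have "(x,s') \<in> set (plan n t (eta xs) False) \<union> set (plan n t (eta xs) True)"
      using cover[OF ev n4] x by (simp add: alph_def)
    then obtain sb where "(x,s') \<in> set (plan n t (eta xs) sb)" by blast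
    then obtain d where d: "d < length (plan n t (eta xs) sb)" "plan n t (eta xs) sb ! d = (x, s')"
      by (metis in_set_conv_nth)
    have dN: "d < N" using d(1) len_plan[OF ev n4] N_def by simp
    obtain k where k: "k < 2 * N ^ length xs" "st n eta (length xs) k = (xs, t, sb)" using t by blast
    define k' where "k' = N * k + d"
    have kd: "k' div N = k" "k' mod N = d" using dN k'_def by simp_all
    have "st n eta (Suc (length xs)) k' = (xs @ [x], ctask n (eta xs) x, s')"
      using st_Suc_eq[OF ev n4, of eta "length xs" k' xs t sb x s'] kd k(2) d(2) N_def by simp
    moreover have "k' < 2 * N ^ Suc (length xs)"
    proof -
      have "k' < N * Suc k" using dN k'_def by simp
      also have "\<dots> \<le> N * (2 * N ^ length xs)" using k(1) by (intro mult_left_mono) auto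
      finally show ?thesis by (simp add: algebra_simps)
    qed
    ultimately show "\<exists>k < 2 * (5*n-6) ^ length (xs @ [x]).
        st n eta (length (xs @ [x])) k = (xs @ [x], ctask n (eta xs) x, s')"
      using N_def by auto
  qed
qed

lemma holder_all: "s \<in> {0..1} \<Longrightarrow> t \<in> {0..1} \<Longrightarrow>
    dist (fc n eta s) (fc n eta t) \<le> 8 * real n * dist s t powr gg n"
proof -
  assume s: "s \<in> {0..1}" and t: "t \<in> {0..1}"
  consider "s < t" | "s = t" | "t < s" by linarith
  then show ?thesis
  proof cases
    case 1 then show ?thesis using holder_lt[OF ev n4, of s t eta] s t by (simp add: dist_real_def)
  next
    case 2 then show ?thesis by simp
  next
    case 3 then show ?thesis using holder_lt[OF ev n4, of t s eta] s t
      by (simp add: dist_real_def dist_commute)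
  qed
qed

lemma fc_cont: "continuous_on {0..1} (fc n eta)"
proof -
  have g0: "0 < gg n" using gg_facts(1)[OF ev n4] .
  define C where "C = 8 * real n"
  have C0: "0 < C" using n4 C_def by simp
  show ?thesis
    unfolding continuous_on_iff
  proof (intro ballI allI impI)
    fix x e :: real assume x: "x \<in> {0..1}" and e: "0 < e"
    define dd where "dd = (e / C) powr (1 / gg n)"
    have dd0: "0 < dd" using e C0 dd_def by simp
    have "\<forall>x'\<in>{0..1}. dist x' x < dd \<longrightarrow> dist (fc n eta x') (fc n eta x) < e"
    proof (intro ballI impI)
      fix x' assume x': "x' \<in> {0..1}" and dx: "dist x' x < dd"
      have "dist x' x powr gg n < dd powr gg n" using dx g0 by (intro powr_less_mono2) auto
      also have "dd powr gg n = e / C" using g0 e C0 by (simp add: dd_def powr_powr)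
      finally have "C * dist x' x powr gg n < e" using C0 by (simp add: field_simps)
      moreover have "dist (fc n eta x') (fc n eta x) \<le> C * dist x' x powr gg n"
        using holder_all[OF x' x] C_def by simp
      ultimately show "dist (fc n eta x') (fc n eta x) < e" by linarith
    qed
    then show "\<exists>d>0. \<forall>x'\<in>{0..1}. dist x' x < d \<longrightarrow> dist (fc n eta x') (fc n eta x) < e"
      using dd0 by blast
  qed
qed

lemma fc_in_K: "t \<in> {0..1} \<Longrightarrow> fc n eta t \<in> Keta n eta"
proof -
  assume t: "t \<in> {0..1}"
  show ?thesis unfolding Keta_def
  proof
    fix m
    let ?w = "fst (st n eta m (idx n m t))"
    have w: "?w \<in> {w. set w \<subseteq> alph n \<and> length w = m}"
      using st_alph[OF ev n4] st_len[OF ev n4] by simp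
    have "fc n eta t \<in> phi n eta ?w ` unit_square"
      using fc_sqr[OF ev n4, of t eta m] t unfolding sqr_def by simp
    then show "fc n eta t \<in> (\<Union>w\<in>{w. set w \<subseteq> alph n \<and> length w = m}. phi n eta w ` unit_square)"
      using w by blast
  qed
qed

lemma K_in_fc: "x \<in> Keta n eta \<Longrightarrow> x \<in> fc n eta ` {0..1}"
proof -
  assume xK: "x \<in> Keta n eta"
  have "\<forall>m. \<exists>t. t \<in> {0..1} \<and> dist (fc n eta t) x \<le> sqrt 2 / real n ^ m"
  proof
    fix m
    obtain w where w: "set w \<subseteq> alph n" "length w = m" "x \<in> phi n eta w ` unit_square"
      using xK unfolding Keta_def by blast
    obtain tt where "\<forall>s. \<exists>k < 2 * (5*n-6) ^ length w. st n eta (length w) k = (w, tt, s)"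
      using cover_st[OF w(1)] by blast
    then obtain k where k: "k < 2 * (5*n-6) ^ m" "st n eta m k = (w, tt, False)" using w(2) by blast
    define t where "t = real k / real (2 * (5*n-6) ^ m)"
    define M where "M = real (2 * (5*n-6) ^ m)"
    have M0: "0 < M" using n4 M_def by simp
    have kM: "real k < M" using k(1) M_def by linarith
    have t01: "t \<in> {0..1}" unfolding t_def M_def[symmetric] using M0 kM by simp
    have "idx n m t = k" using idx_of[OF ev n4 k(1)] t_def by simp
    then have "fc n eta t \<in> sqr n eta m k" using fc_sqr[OF ev n4, of t eta m] t01 by simp
    moreover have "x \<in> sqr n eta m k" using w(3) k(2) unfolding sqr_def by simp
    ultimately have "dist (fc n eta t) x \<le> sqrt 2 / real n ^ m" by (rule sqr_dist[OF ev n4])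
    then show "\<exists>t. t \<in> {0..1} \<and> dist (fc n eta t) x \<le> sqrt 2 / real n ^ m" using t01 by blast
  qed
  then obtain T where T: "\<And>m. T m \<in> {0..1}" "\<And>m. dist (fc n eta (T m)) x \<le> sqrt 2 / real n ^ m"
    by metis
  have lim: "(\<lambda>m. fc n eta (T m)) \<longlonglongrightarrow> x"
    unfolding lim_sequentially
  proof (intro allI impI)
    fix r :: real assume r: "0 < r"
    obtain M where M: "sqrt 2 / real n ^ M < r" using small_pow[OF ev n4 r] by blast
    have "\<forall>m\<ge>M. dist (fc n eta (T m)) x < r"
      using T(2) pow_anti[OF ev n4] M by (meson le_less_trans)
    then show "\<exists>no. \<forall>m\<ge>no. dist (fc n eta (T m)) x < r" by blast
  qed
  have "closed (fc n eta ` {0..1})"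
    by (intro compact_imp_closed compact_continuous_image fc_cont compact_Icc)
  then show ?thesis using closed_sequentially[OF _ _ lim] T(1) by blast
qed

lemma main: "\<exists>f :: real \<Rightarrow> real \<times> real.
   holder_continuous_on (1 / (ln (real (5*n - 6)) / ln (real n))) {0..1} f \<and> f ` {0..1} = Keta n eta"
proof (intro exI conjI)
  show "holder_continuous_on (1 / (ln (real (5*n - 6)) / ln (real n))) {0..1} (fc n eta)"
    unfolding holder_continuous_on_def gg_def[OF ev n4, symmetric]
    by (intro exI[of _ "8 * real n"]) (use holder_all in blast)
  show "fc n eta ` {0..1} = Keta n eta" using fc_in_K K_in_fc by blast
qed

end


theorem proposition6p1:
  fixes n :: nat and eta :: "nat list \<Rightarrow> nat"
  assumes "even n" and "n \<ge> 4"
    and "\<forall>w. set w \<subseteq> alph n \<longrightarrow> eta w \<in> {1, 2}"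
  shows "\<exists>f :: real \<Rightarrow> real \<times> real.
           holder_continuous_on (1 / (ln (real (5*n - 6)) / ln (real n))) {0..1} f
         \<and> f ` {0..1} = Keta n eta"
  using main[OF assms(1,2)] by blast

end
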